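(* For positive integers $k<n$, $$\theta_k(\ell_\infty,\ell_\infty)\le \binom{n}{k}(k+1)^{\frac{k-1}{2}},$$ i.e. every $B\in\mathbb{C}^{n\times n}$ whose columns all have $\ell_\infty$ norm $1$ satisfies $\|C_k(B)\|_\infty\le\binom nk (k+1)^{(k-1)/2}$.
   Context: $C_k(B)$ is the $k$th compound of $B$: the $\binom nk\times\binom nk$ matrix of all $k\times k$ minors $\det B(\alpha|\beta)$, indexed by $k$-subsets $\alpha,\beta$ of $\{1,\ldots,n\}$. For vectors $\|\cdot\|_\infty$ is the max-modulus norm; for matrices it is the induced operator norm (maximum absolute row sum). $\theta_k(\mu,\nu)=\max\{\mu(C_k(B)): B\in\mathbb{C}^{n\times n},\ \nu(\mathrm{col}_i(B))=1\ \forall i\}$, where $\mathrm{col}_i(B)$ is the $i$th column. *)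

theory Defs
  imports Complex_Main "Jordan_Normal_Form.Determinant"
begin

(* k-subsets of the index set {0..<n} (0-based indexing of {1..n}) *)
definition ksubsets :: "nat \<Rightarrow> nat \<Rightarrow> nat set set" where
  "ksubsets n k = {S. S \<subseteq> {0..<n} \<and> card S = k}"

definition minor :: "complex mat \<Rightarrow> nat set \<Rightarrow> nat set \<Rightarrow> complex" where
  "minor B \<alpha> \<beta> = det (mat (card \<alpha>) (card \<beta>)
      (\<lambda>(i, j). B $$ (sorted_list_of_set \<alpha> ! i, sorted_list_of_set \<beta> ! j)))"

(* entry of the k-th compound C_k(B) indexed by k-subsets (alpha, beta) is minor B alpha beta;
   its induced infinity-norm is the maximal absolute row sum *)
definition compound_inf_norm :: "nat \<Rightarrow> complex mat \<Rightarrow> real" where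
  "compound_inf_norm k B =
     Max ((\<lambda>\<alpha>. \<Sum>\<beta>\<in>ksubsets (dim_col B) k. cmod (minor B \<alpha> \<beta>)) ` ksubsets (dim_row B) k)"

definition col_inf_norm :: "complex mat \<Rightarrow> nat \<Rightarrow> real" where
  "col_inf_norm B j = Max ((\<lambda>i. cmod (B $$ (i, j))) ` {0..<dim_row B})"

end

theory Submission
  imports Defs
begin


interpretation cnj_hom: comm_ring_hom cnj by unfold_locales auto

definition ip :: "nat \<Rightarrow> (nat \<Rightarrow> complex) \<Rightarrow> (nat \<Rightarrow> complex) \<Rightarrow> complex" where
  "ip m u v = (\<Sum>j<m. u j * cnj (v j))"

definition nr :: "nat \<Rightarrow> (nat \<Rightarrow> complex) \<Rightarrow> real" where
  "nr m u = (\<Sum>j<m. (cmod (u j))^2)"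

definition gmu :: "nat \<Rightarrow> (nat \<Rightarrow> complex) \<Rightarrow> (nat \<Rightarrow> complex) \<Rightarrow> complex" where
  "gmu m v w = (if ip m w w = 0 then 0 else ip m v w / ip m w w)"

fun gsf :: "nat \<Rightarrow> (nat \<Rightarrow> nat \<Rightarrow> complex) \<Rightarrow> nat \<Rightarrow> nat \<Rightarrow> nat \<Rightarrow> complex" where
  "gsf m R 0 = (\<lambda>_ _. 0)"
| "gsf m R (Suc i) = (gsf m R i)(i := (\<lambda>j. R i j - (\<Sum>l<i. gmu m (R i) (gsf m R i l) * gsf m R i l j)))"

definition gsw :: "nat \<Rightarrow> (nat \<Rightarrow> nat \<Rightarrow> complex) \<Rightarrow> nat \<Rightarrow> nat \<Rightarrow> complex" where
  "gsw m R l = gsf m R (Suc l) l"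

lemma gsf_stable: "l < i \<Longrightarrow> gsf m R i l = gsw m R l"
  unfolding gsw_def
proof (induction i)
  case 0 then show ?case by simp
next
  case (Suc i)
  then show ?case by (cases "l = i") auto
qed

lemma gsw_eq: "gsw m R i = (\<lambda>j. R i j - (\<Sum>l<i. gmu m (R i) (gsw m R l) * gsw m R l j))"
proof -
  have "gsw m R i = (\<lambda>j. R i j - (\<Sum>l<i. gmu m (R i) (gsf m R i l) * gsf m R i l j))"
    unfolding gsw_def by simp
  also have "\<dots> = (\<lambda>j. R i j - (\<Sum>l<i. gmu m (R i) (gsw m R l) * gsw m R l j))"
    by (intro ext arg_cong2[where f="(-)"] refl sum.cong) (auto simp: gsf_stable)
  finally show ?thesis .
qed

lemma ip_cnj: "ip m u v = cnj (ip m v u)"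
  unfolding ip_def by (simp add: mult.commute)

lemma ip_diff_left: "ip m (\<lambda>j. u j - v j) w = ip m u w - ip m v w"
  unfolding ip_def by (simp add: algebra_simps sum_subtractf)

lemma ip_sum_left: "ip m (\<lambda>j. \<Sum>l\<in>L. c l * f l j) w = (\<Sum>l\<in>L. c l * ip m (f l) w)"
  unfolding ip_def by (simp add: sum_distrib_right sum_distrib_left mult.assoc sum.swap[of _ L])

lemma ip_self: "ip m u u = of_real (nr m u)"
proof -
  have "u j * cnj (u j) = of_real ((cmod (u j))^2)" for j by (simp only: complex_norm_square)
  then show ?thesis unfolding ip_def nr_def of_real_sum by simp
qed

lemma nr_nonneg: "nr m u \<ge> 0"
  unfolding nr_def by (simp add: sum_nonneg)

lemma nr_zero: "nr m u = 0 \<Longrightarrow> j < m \<Longrightarrow> u j = 0"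
  unfolding nr_def by (subst (asm) sum_nonneg_eq_0_iff) auto

lemma ip_zero_right: "ip m w w = 0 \<Longrightarrow> ip m v w = 0"
  unfolding ip_self by (simp add: ip_def nr_zero)

lemma cs_real:
  fixes a b :: "nat \<Rightarrow> real"
  shows "(\<Sum>i\<in>S. a i * b i)^2 \<le> (\<Sum>i\<in>S. (a i)^2) * (\<Sum>i\<in>S. (b i)^2)"
proof -
  have "0 \<le> (\<Sum>i\<in>S. \<Sum>j\<in>S. (a i * b j - a j * b i)^2)"
    by (intro sum_nonneg) auto
  also have "\<dots> = (\<Sum>i\<in>S. \<Sum>j\<in>S. (a i)^2 * (b j)^2 + (b i)^2 * (a j)^2 - 2 * ((a i * b i) * (a j * b j)))"
    by (intro sum.cong refl) (simp add: power2_eq_square algebra_simps)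
  also have "\<dots> = (\<Sum>i\<in>S. (a i)^2 * (\<Sum>j\<in>S. (b j)^2) + (b i)^2 * (\<Sum>j\<in>S. (a j)^2) - 2 * ((a i * b i) * (\<Sum>j\<in>S. a j * b j)))"
    by (simp add: sum_subtractf sum.distrib sum_distrib_left)
  also have "\<dots> = 2 * ((\<Sum>i\<in>S. (a i)^2) * (\<Sum>i\<in>S. (b i)^2)) - 2 * (\<Sum>i\<in>S. a i * b i)^2"
    by (simp add: sum_subtractf sum.distrib flip: sum_distrib_right sum_distrib_left add: power2_eq_square mult.commute)
  finally show ?thesis by simp
qed

lemma ip_cs: "(cmod (ip m u v))^2 \<le> nr m u * nr m v"
proof -
  have "cmod (ip m u v) \<le> (\<Sum>j<m. cmod (u j) * cmod (v j))"
    unfolding ip_def by (rule order_trans[OF norm_sum]) (simp add: norm_mult)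
  hence "(cmod (ip m u v))^2 \<le> (\<Sum>j<m. cmod (u j) * cmod (v j))^2"
    by (simp add: power_mono)
  also have "\<dots> \<le> nr m u * nr m v" unfolding nr_def by (rule cs_real)
  finally show ?thesis .
qed

lemma gsw_orth: "l < i \<Longrightarrow> ip m (gsw m R i) (gsw m R l) = 0"
proof (induction i arbitrary: l rule: less_induct)
  case (less i)
  let ?W = "gsw m R"
  have orth: "ip m (?W l') (?W l) = 0" if "l' < i" "l' \<noteq> l" for l'
  proof (cases "l' < l")
    case True
    then have "ip m (?W l) (?W l') = 0" using less.IH[of l l'] less.prems by auto
    then show ?thesis by (subst ip_cnj) simp
  next
    case False
    then show ?thesis using less.IH[of l' l] that by auto
  qed
  have "ip m (?W i) (?W l) = ip m (R i) (?W l) - (\<Sum>l'<i. gmu m (R i) (?W l') * ip m (?W l') (?W l))"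
    by (subst gsw_eq) (simp add: ip_diff_left ip_sum_left)
  also have "(\<Sum>l'<i. gmu m (R i) (?W l') * ip m (?W l') (?W l)) = gmu m (R i) (?W l) * ip m (?W l) (?W l)"
    using less.prems by (subst sum.remove[of _ l]) (auto simp: orth intro!: sum.neutral)
  also have "\<dots> = ip m (R i) (?W l)"
    by (auto simp: gmu_def ip_zero_right)
  finally show ?case by simp
qed

lemma gsw_self: "ip m (gsw m R i) (gsw m R i) = ip m (R i) (gsw m R i)"
proof -
  let ?W = "gsw m R"
  have "ip m (?W i) (?W i) = ip m (R i) (?W i) - (\<Sum>l'<i. gmu m (R i) (?W l') * ip m (?W l') (?W i))"
    by (subst (1) gsw_eq) (simp add: ip_diff_left ip_sum_left)
  also have "(\<Sum>l'<i. gmu m (R i) (?W l') * ip m (?W l') (?W i)) = 0"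
    by (intro sum.neutral ballI) (subst ip_cnj, simp add: gsw_orth)
  finally show ?thesis by simp
qed

lemma gsw_nr: "nr m (gsw m R i) \<le> nr m (R i)"
proof -
  let ?w = "nr m (gsw m R i)"
  have "cmod (ip m (R i) (gsw m R i)) = cmod (of_real ?w)"
    using gsw_self[of m R i] by (simp add: ip_self)
  also have "\<dots> = ?w" using nr_nonneg[of m "gsw m R i"] by simp
  finally have "?w^2 = (cmod (ip m (R i) (gsw m R i)))^2" by simp
  also have "\<dots> \<le> nr m (R i) * ?w" by (rule ip_cs)
  finally have "?w * ?w \<le> nr m (R i) * ?w" by (simp add: power2_eq_square)
  then show ?thesis using nr_nonneg[of m "gsw m R i"]
    by (cases "?w = 0") (auto simp: nr_nonneg)
qed

lemma hadamard_sq: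
  fixes A :: "complex mat"
  assumes A: "A \<in> carrier_mat m m"
  shows "(cmod (det A))^2 \<le> (\<Prod>i<m. \<Sum>j<m. (cmod (A $$ (i,j)))^2)"
proof -
  define R where "R = (\<lambda>i j. A $$ (i,j))"
  define W where "W = gsw m R"
  define Wm where "Wm = mat m m (\<lambda>(i,j). W i j)"
  define Mm where "Mm = mat m m (\<lambda>(i,l). if l < i then gmu m (R i) (W l) else if l = i then 1 else (0::complex))"
  define Vm where "Vm = mat m m (\<lambda>(j,l). cnj (W l j))"
  have Wm: "Wm \<in> carrier_mat m m" and Mm: "Mm \<in> carrier_mat m m" and Vm: "Vm \<in> carrier_mat m m"
    unfolding Wm_def Mm_def Vm_def by auto
  have AMW: "A = Mm * Wm"
  proof (rule eq_matI)
    fix i j assume i: "i < dim_row (Mm * Wm)" and j: "j < dim_col (Mm * Wm)"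
    hence im: "i < m" and jm: "j < m" using Mm Wm by auto
    have "(Mm * Wm) $$ (i,j) = (\<Sum>l\<in>{0..<m}. Mm $$ (i,l) * W l j)"
      using im jm Mm Wm by (simp add: scalar_prod_def Wm_def)
    also have "\<dots> = (\<Sum>l\<in>{0..<Suc i}. Mm $$ (i,l) * W l j)"
      using im by (intro sum.mono_neutral_right) (auto simp: Mm_def)
    also have "\<dots> = (\<Sum>l<i. gmu m (R i) (W l) * W l j) + W i j"
      using im by (simp add: Mm_def lessThan_atLeast0)
    also have "\<dots> = R i j"
      unfolding W_def by (subst (2) gsw_eq) simp
    finally show "A $$ (i,j) = (Mm * Wm) $$ (i,j)" by (simp add: R_def)
  qed (use A Mm Wm in auto)
  have "det Mm = prod_list (diag_mat Mm)"
    by (rule det_lower_triangular[OF _ Mm]) (auto simp: Mm_def)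
  also have "\<dots> = 1" unfolding prod_list_diag_prod using Mm by (simp add: Mm_def)
  finally have dM: "det Mm = 1" .
  have dA: "det A = det Wm" using AMW det_mult[OF Mm Wm] dM by simp
  have "Vm = transpose_mat (map_mat cnj Wm)"
    by (rule eq_matI) (auto simp: Vm_def Wm_def)
  hence dV: "det Vm = cnj (det Wm)" using Wm by (simp add: det_transpose)
  have WV: "Wm * Vm = mat m m (\<lambda>(i,l). ip m (W i) (W l))"
    by (rule eq_matI) (auto simp: Wm_def Vm_def scalar_prod_def ip_def lessThan_atLeast0)
  have "det (Wm * Vm) = prod_list (diag_mat (Wm * Vm))"
    unfolding WV by (rule det_lower_triangular[where n=m]) (auto simp: W_def, subst ip_cnj, simp add: gsw_orth)
  also have "\<dots> = (\<Prod>i<m. of_real (nr m (W i)))"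
    unfolding prod_list_diag_prod WV by (simp add: ip_self lessThan_atLeast0)
  finally have "det A * cnj (det A) = of_real (\<Prod>i<m. nr m (W i))"
    using det_mult[OF Wm Vm] dA dV by simp
  hence "(cmod (det A))^2 = (\<Prod>i<m. nr m (W i))"
    by (metis complex_norm_square of_real_eq_iff)
  also have "\<dots> \<le> (\<Prod>i<m. nr m (R i))"
    by (intro prod_mono) (auto simp: nr_nonneg W_def gsw_nr)
  finally show ?thesis by (simp add: nr_def R_def)
qed



lemma hadamard_unit:
  fixes A :: "complex mat"
  assumes A: "A \<in> carrier_mat m m" and m: "m > 0"
    and le1: "\<And>i j. i < m \<Longrightarrow> j < m \<Longrightarrow> cmod (A $$ (i,j)) \<le> 1"
  shows "cmod (det A) \<le> real m powr (real m / 2)"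
proof -
  have "(cmod (det A))^2 \<le> (\<Prod>i<m. \<Sum>j<m. (cmod (A $$ (i,j)))^2)" by (rule hadamard_sq[OF A])
  also have "\<dots> \<le> (\<Prod>i<m. \<Sum>j<m. (1::real))"
    by (intro prod_mono conjI sum_nonneg sum_mono) (auto intro!: power_le_one le1)
  also have "\<dots> = real m ^ m" by simp
  also have "\<dots> = (real m powr (real m / 2))^2"
  proof -
    have "(real m powr (real m / 2))^2 = real m powr (of_nat 2 * (real m / 2))"
      using m by (intro powr_power) simp
    also have "\<dots> = real m powr (real m)" by simp
    also have "\<dots> = real m ^ m" using m by (simp add: powr_realpow)
    finally show ?thesis by simp
  qed
  finally show ?thesis by (rule power2_le_imp_le) simp
qed

lemma sorted_del_nth:
  fixes G :: "nat set"
  assumes fin: "finite G" and j: "j < card G" and i: "i < card G - 1"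
  shows "sorted_list_of_set (G - {sorted_list_of_set G ! j}) ! i = sorted_list_of_set G ! insert_index j i"
proof -
  define s where "s = sorted_list_of_set G"
  have ls: "length s = card G" and ds: "distinct s" and ss: "sorted s" and sets: "set s = G"
    using fin by (auto simp: s_def)
  define ys where "ys = filter (\<lambda>x. x \<noteq> s ! j) s"
  have "set ys = G - {s ! j}" using sets by (auto simp: ys_def)
  moreover have "sorted ys" "distinct ys" using ss ds by (auto simp: ys_def sorted_wrt_filter)
  ultimately have sl: "sorted_list_of_set (G - {s ! j}) = ys"
    by (metis sorted_list_of_set_sort_remdups distinct_remdups_id sorted_sort_id)
  have dec: "s = take j s @ s ! j # drop (Suc j) s" using j ls by (simp add: id_take_nth_drop)
  have nin: "s ! j \<notin> set (take j s)" "s ! j \<notin> set (drop (Suc j) s)"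
    using ds dec by (metis distinct.simps(2) distinct_append not_distinct_conv_prefix)+
  have ys2: "ys = take j s @ drop (Suc j) s"
  proof -
    have "ys = filter (\<lambda>x. x \<noteq> s ! j) (take j s @ s ! j # drop (Suc j) s)"
      unfolding ys_def using dec by (rule arg_cong)
    moreover have "filter (\<lambda>x. x \<noteq> s ! j) (take j s) = take j s"
      by (subst filter_id_conv) (use nin in blast)
    moreover have "filter (\<lambda>x. x \<noteq> s ! j) (drop (Suc j) s) = drop (Suc j) s"
      by (subst filter_id_conv) (use nin in blast)
    ultimately show ?thesis by simp
  qed
  show ?thesis
    unfolding s_def[symmetric] sl ys2 using i j ls
    by (auto simp: nth_append insert_index_def)
qed

lemma neg1_sq: "((-1::complex)^j) * (-1)^j = 1"
  by (simp flip: power_mult_distrib)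

lemma phase_mult: "(if d = 0 then 0 else cnj d / complex_of_real (cmod d)) * d = complex_of_real (cmod d)"
proof (cases "d = 0")
  case False
  have "cnj d * d = complex_of_real ((cmod d)^2)" using complex_norm_square[of d] by (simp add: mult.commute)
  then show ?thesis using False by (simp add: field_simps power2_eq_square)
qed simp

lemma phase_norm: "cmod ((-1::complex)^j * (if d = 0 then 0 else cnj d / complex_of_real (cmod d))) \<le> 1"
  by (simp add: norm_mult norm_power norm_divide)

lemma row_block:
  fixes B :: "complex mat"
  assumes le1: "\<And>i j. i < n \<Longrightarrow> j < n \<Longrightarrow> cmod (B $$ (i,j)) \<le> 1"
    and a: "\<alpha> \<in> ksubsets n k" and g: "\<gamma> \<in> ksubsets n (Suc k)"
  shows "(\<Sum>j<Suc k. cmod (minor B \<alpha> (\<gamma> - {sorted_list_of_set \<gamma> ! j}))) \<le> real (Suc k) powr (real (Suc k) / 2)"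
proof -
  define sa where "sa = sorted_list_of_set \<alpha>"
  define sg where "sg = sorted_list_of_set \<gamma>"
  have fa: "finite \<alpha>" and ca: "card \<alpha> = k" and sua: "\<alpha> \<subseteq> {0..<n}"
    using a unfolding ksubsets_def by (auto intro: finite_subset)
  have fg: "finite \<gamma>" and cg: "card \<gamma> = Suc k" and sug: "\<gamma> \<subseteq> {0..<n}"
    using g unfolding ksubsets_def by (auto intro: finite_subset)
  have lsa: "length sa = k" and lsg: "length sg = Suc k" using ca cg fa fg by (auto simp: sa_def sg_def)
  have sa_n: "sa ! i < n" if "i < k" for i
    using that lsa sua fa by (metis atLeastLessThan_iff nth_mem sa_def set_sorted_list_of_set subsetD)
  have sg_n: "sg ! j < n" if "j < Suc k" for j
    using that lsg sug fg by (metis atLeastLessThan_iff nth_mem sg_def set_sorted_list_of_set subsetD)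
  have sg_in: "sg ! j \<in> \<gamma>" if "j < Suc k" for j
    using that lsg fg by (metis nth_mem sg_def set_sorted_list_of_set)
  define d where "d j = minor B \<alpha> (\<gamma> - {sg ! j})" for j
  define x where "x j = (-1::complex)^j * (if d j = 0 then 0 else cnj (d j) / of_real (cmod (d j)))" for j
  define M where "M = mat (Suc k) (Suc k) (\<lambda>(i,j). if i = 0 then x j else B $$ (sa ! (i-1), sg ! j))"
  have M: "M \<in> carrier_mat (Suc k) (Suc k)" by (simp add: M_def)
  have del: "det (mat_delete M 0 j) = d j" if j: "j < Suc k" for j
  proof -
    have cd: "card (\<gamma> - {sg ! j}) = k" using sg_in[OF j] fg cg by simp
    have "mat_delete M 0 j = mat (card \<alpha>) (card (\<gamma> - {sg ! j}))
      (\<lambda>(i, j'). B $$ (sorted_list_of_set \<alpha> ! i, sorted_list_of_set (\<gamma> - {sg ! j}) ! j'))"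
    proof (rule eq_matI)
      fix i j' assume i: "i < dim_row (mat (card \<alpha>) (card (\<gamma> - {sg ! j}))
      (\<lambda>(i, j'). B $$ (sorted_list_of_set \<alpha> ! i, sorted_list_of_set (\<gamma> - {sg ! j}) ! j')))"
        and j': "j' < dim_col (mat (card \<alpha>) (card (\<gamma> - {sg ! j}))
      (\<lambda>(i, j'). B $$ (sorted_list_of_set \<alpha> ! i, sorted_list_of_set (\<gamma> - {sg ! j}) ! j')))"
      hence ik: "i < k" and jk: "j' < k" using ca cd by auto
      have "sorted_list_of_set (\<gamma> - {sg ! j}) ! j' = sg ! insert_index j j'"
        unfolding sg_def by (rule sorted_del_nth) (use fg cg j jk sg_def in auto)
      then show "mat_delete M 0 j $$ (i, j') = mat (card \<alpha>) (card (\<gamma> - {sg ! j}))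
      (\<lambda>(i, j'). B $$ (sorted_list_of_set \<alpha> ! i, sorted_list_of_set (\<gamma> - {sg ! j}) ! j')) $$ (i, j')"
        using ik jk j ca cd by (auto simp: mat_delete_def M_def sa_def insert_index_def)
    qed (use ca cd in \<open>auto simp: M_def\<close>)
    then show ?thesis unfolding d_def minor_def sg_def by simp
  qed
  have "det M = (\<Sum>j<Suc k. M $$ (0,j) * cofactor M 0 j)"
    by (rule laplace_expansion_row[OF M]) simp
  also have "\<dots> = (\<Sum>j<Suc k. of_real (cmod (d j)))"
  proof (rule sum.cong[OF refl])
    fix j assume "j \<in> {..<Suc k}"
    hence j: "j < Suc k" by simp
    have "M $$ (0,j) * cofactor M 0 j = ((-1)^j * (-1)^j) * ((if d j = 0 then 0 else cnj (d j) / of_real (cmod (d j))) * d j)"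
    proof -
      have "M $$ (0,j) = x j" using j by (simp add: M_def)
      moreover have "cofactor M 0 j = (-1)^j * d j" by (simp add: cofactor_def del[OF j])
      ultimately show ?thesis by (simp add: x_def mult_ac)
    qed
    also have "\<dots> = of_real (cmod (d j))" by (simp only: neg1_sq phase_mult) simp
    finally show "M $$ (0,j) * cofactor M 0 j = of_real (cmod (d j))" .
  qed
  finally have "det M = of_real (\<Sum>j<Suc k. cmod (d j))" by simp
  hence "cmod (det M) = \<bar>\<Sum>j<Suc k. cmod (d j)\<bar>" by (simp only: norm_of_real)
  also have "\<dots> = (\<Sum>j<Suc k. cmod (d j))" by (rule abs_of_nonneg) (simp add: sum_nonneg)
  finally have "cmod (det M) = (\<Sum>j<Suc k. cmod (d j))" .
  moreover have "cmod (det M) \<le> real (Suc k) powr (real (Suc k) / 2)"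
  proof (rule hadamard_unit[OF M])
    fix i j assume i: "i < Suc k" and j: "j < Suc k"
    show "cmod (M $$ (i,j)) \<le> 1"
    proof (cases "i = 0")
      case True then show ?thesis using i j by (simp add: M_def x_def phase_norm)
    next
      case False then show ?thesis using i j sa_n[of "i-1"] sg_n[of j] by (simp add: M_def le1)
    qed
  qed simp
  ultimately show ?thesis by (simp add: d_def sg_def)
qed

lemma finite_ksubsets: "finite (ksubsets n k)"
  unfolding ksubsets_def by (rule finite_subset[of _ "Pow {0..<n}"]) auto

lemma sub_sum:
  assumes g: "\<gamma> \<in> ksubsets n (Suc k)"
  shows "(\<Sum>\<beta>\<in>{\<beta>\<in>ksubsets n k. \<beta> \<subseteq> \<gamma>}. f \<beta>) = (\<Sum>j<Suc k. f (\<gamma> - {sorted_list_of_set \<gamma> ! j}))"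
proof -
  define sg where "sg = sorted_list_of_set \<gamma>"
  have fg: "finite \<gamma>" and cg: "card \<gamma> = Suc k" and sug: "\<gamma> \<subseteq> {0..<n}"
    using g unfolding ksubsets_def by (auto intro: finite_subset)
  have lsg: "length sg = Suc k" and dsg: "distinct sg" and ssg: "set sg = \<gamma>"
    using cg fg by (auto simp: sg_def)
  show ?thesis unfolding sg_def[symmetric]
  proof (rule sum.reindex_cong[where l = "\<lambda>j. \<gamma> - {sg ! j}"])
    show "inj_on (\<lambda>j. \<gamma> - {sg ! j}) {..<Suc k}"
    proof (rule inj_onI)
      fix i j assume i: "i \<in> {..<Suc k}" and j: "j \<in> {..<Suc k}" and e: "\<gamma> - {sg ! i} = \<gamma> - {sg ! j}"
      have "sg ! i \<in> \<gamma>" "sg ! j \<in> \<gamma>" using i j lsg ssg nth_mem[of i sg] nth_mem[of j sg] by auto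
      with e have "sg ! i = sg ! j" by blast
      then show "i = j" using i j lsg dsg by (simp add: nth_eq_iff_index_eq)
    qed
    show "{\<beta> \<in> ksubsets n k. \<beta> \<subseteq> \<gamma>} = (\<lambda>j. \<gamma> - {sg ! j}) ` {..<Suc k}"
    proof
      show "{\<beta> \<in> ksubsets n k. \<beta> \<subseteq> \<gamma>} \<subseteq> (\<lambda>j. \<gamma> - {sg ! j}) ` {..<Suc k}"
      proof
        fix \<beta> assume b: "\<beta> \<in> {\<beta> \<in> ksubsets n k. \<beta> \<subseteq> \<gamma>}"
        hence bg: "\<beta> \<subseteq> \<gamma>" and cb: "card \<beta> = k" by (auto simp: ksubsets_def)
        have "\<gamma> - \<beta> \<noteq> {}" using bg cb cg by (metis Diff_eq_empty_iff n_not_Suc_n subset_antisym)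
        then obtain a where a: "a \<in> \<gamma>" "a \<notin> \<beta>" by blast
        have "\<beta> \<subseteq> \<gamma> - {a}" using a bg by blast
        moreover have "card (\<gamma> - {a}) = card \<beta>" using a fg cg cb by simp
        ultimately have "\<beta> = \<gamma> - {a}" using fg by (metis card_subset_eq finite_Diff)
        moreover obtain j where "j < Suc k" "a = sg ! j" using a ssg lsg by (metis in_set_conv_nth)
        ultimately show "\<beta> \<in> (\<lambda>j. \<gamma> - {sg ! j}) ` {..<Suc k}" by auto
      qed
      show "(\<lambda>j. \<gamma> - {sg ! j}) ` {..<Suc k} \<subseteq> {\<beta> \<in> ksubsets n k. \<beta> \<subseteq> \<gamma>}"
      proof
        fix \<beta> assume "\<beta> \<in> (\<lambda>j. \<gamma> - {sg ! j}) ` {..<Suc k}"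
        then obtain j where j: "j < Suc k" and bj: "\<beta> = \<gamma> - {sg ! j}" by auto
        have "sg ! j \<in> \<gamma>" using j lsg ssg by (metis nth_mem)
        then show "\<beta> \<in> {\<beta> \<in> ksubsets n k. \<beta> \<subseteq> \<gamma>}"
          using bj sug fg cg by (auto simp: ksubsets_def)
      qed
    qed
  qed simp
qed

lemma card_sup:
  assumes b: "\<beta> \<in> ksubsets n k"
  shows "card {\<gamma> \<in> ksubsets n (Suc k). \<beta> \<subseteq> \<gamma>} = n - k"
proof -
  have fb: "finite \<beta>" and cb: "card \<beta> = k" and sub: "\<beta> \<subseteq> {0..<n}"
    using b unfolding ksubsets_def by (auto intro: finite_subset)
  have "{\<gamma> \<in> ksubsets n (Suc k). \<beta> \<subseteq> \<gamma>} = (\<lambda>a. insert a \<beta>) ` ({0..<n} - \<beta>)"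
  proof
    show "{\<gamma> \<in> ksubsets n (Suc k). \<beta> \<subseteq> \<gamma>} \<subseteq> (\<lambda>a. insert a \<beta>) ` ({0..<n} - \<beta>)"
    proof
      fix \<gamma> assume "\<gamma> \<in> {\<gamma> \<in> ksubsets n (Suc k). \<beta> \<subseteq> \<gamma>}"
      hence bg: "\<beta> \<subseteq> \<gamma>" and cg: "card \<gamma> = Suc k" and sg: "\<gamma> \<subseteq> {0..<n}"
        by (auto simp: ksubsets_def)
      have fg: "finite \<gamma>" using sg by (auto intro: finite_subset)
      have "\<gamma> - \<beta> \<noteq> {}" using bg cb cg by (metis Diff_eq_empty_iff n_not_Suc_n subset_antisym)
      then obtain a where a: "a \<in> \<gamma>" "a \<notin> \<beta>" by blast
      have "insert a \<beta> \<subseteq> \<gamma>" using a bg by blast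
      moreover have "card (insert a \<beta>) = card \<gamma>" using a fb cg cb by simp
      ultimately have "\<gamma> = insert a \<beta>" using fg by (metis card_subset_eq)
      then show "\<gamma> \<in> (\<lambda>a. insert a \<beta>) ` ({0..<n} - \<beta>)" using a sg by auto
    qed
    show "(\<lambda>a. insert a \<beta>) ` ({0..<n} - \<beta>) \<subseteq> {\<gamma> \<in> ksubsets n (Suc k). \<beta> \<subseteq> \<gamma>}"
      using sub fb cb by (auto simp: ksubsets_def)
  qed
  moreover have "inj_on (\<lambda>a. insert a \<beta>) ({0..<n} - \<beta>)"
    by (rule inj_onI) (metis Diff_iff insert_iff)
  ultimately have "card {\<gamma> \<in> ksubsets n (Suc k). \<beta> \<subseteq> \<gamma>} = card ({0..<n} - \<beta>)"
    by (simp add: card_image)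
  also have "\<dots> = n - k" using sub fb cb by (simp add: card_Diff_subset)
  finally show ?thesis .
qed

lemma double_count:
  fixes f :: "nat set \<Rightarrow> real"
  shows "(\<Sum>\<gamma>\<in>ksubsets n (Suc k). \<Sum>\<beta>\<in>{\<beta>\<in>ksubsets n k. \<beta> \<subseteq> \<gamma>}. f \<beta>)
     = real (n - k) * (\<Sum>\<beta>\<in>ksubsets n k. f \<beta>)"
proof -
  have "(\<Sum>\<gamma>\<in>ksubsets n (Suc k). \<Sum>\<beta>\<in>{\<beta>\<in>ksubsets n k. \<beta> \<subseteq> \<gamma>}. f \<beta>)
     = (\<Sum>\<beta>\<in>ksubsets n k. \<Sum>\<gamma>\<in>{\<gamma>\<in>ksubsets n (Suc k). \<beta> \<subseteq> \<gamma>}. f \<beta>)"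
    by (rule sum.swap_restrict) (auto simp: finite_ksubsets)
  also have "\<dots> = (\<Sum>\<beta>\<in>ksubsets n k. real (n - k) * f \<beta>)"
    by (rule sum.cong) (auto simp: card_sup)
  finally show ?thesis by (simp add: sum_distrib_left)
qed

theorem theorem2p7:
  fixes B :: "complex mat" and n k :: nat
  assumes "0 < k" and "k < n"
    and "B \<in> carrier_mat n n"
    and "\<And>j. j < n \<Longrightarrow> col_inf_norm B j = 1"
  shows "compound_inf_norm k B \<le> real (n choose k) * (real k + 1) powr ((real k - 1) / 2)"
proof -
  note kpos = assms(1) and kn = assms(2) and Bc = assms(3) and col = assms(4)
  have dr: "dim_row B = n" and dc: "dim_col B = n" using Bc by auto
  have le1: "cmod (B $$ (i,j)) \<le> 1" if i: "i < n" and j: "j < n" for i j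
  proof -
    have "cmod (B $$ (i,j)) \<le> Max ((\<lambda>i. cmod (B $$ (i, j))) ` {0..<dim_row B})"
      using i dr by (intro Max_ge) auto
    then show ?thesis using col[OF j] unfolding col_inf_norm_def by simp
  qed
  define P where "P = (real k + 1) powr ((real k - 1) / 2)"
  have P1: "real (Suc k) powr (real (Suc k) / 2) = real (Suc k) * P"
  proof -
    have e: "real (Suc k) / 2 = 1 + (real k - 1) / 2" by (simp add: field_simps)
    have "real (Suc k) powr (real (Suc k) / 2) = real (Suc k) powr (1 + (real k - 1) / 2)"
      by (simp only: e)
    also have "\<dots> = real (Suc k) powr 1 * real (Suc k) powr ((real k - 1) / 2)"
      by (rule powr_add)
    also have "\<dots> = real (Suc k) * P" unfolding P_def by (simp add: add.commute)
    finally show ?thesis .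
  qed
  have binom: "real (n choose Suc k) * real (Suc k) = real (n - k) * real (n choose k)"
  proof -
    have "Suc k * (n choose Suc k) = (n - k) * (n choose k)"
      by (simp only: binomial_absorption binomial_absorb_comp)
    then show ?thesis by (metis of_nat_mult mult.commute)
  qed
  have row: "(\<Sum>\<beta>\<in>ksubsets n k. cmod (minor B \<alpha> \<beta>)) \<le> real (n choose k) * P"
    if a: "\<alpha> \<in> ksubsets n k" for \<alpha>
  proof -
    have "real (n - k) * (\<Sum>\<beta>\<in>ksubsets n k. cmod (minor B \<alpha> \<beta>))
        = (\<Sum>\<gamma>\<in>ksubsets n (Suc k). \<Sum>\<beta>\<in>{\<beta>\<in>ksubsets n k. \<beta> \<subseteq> \<gamma>}. cmod (minor B \<alpha> \<beta>))"
      by (rule double_count[symmetric])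
    also have "\<dots> = (\<Sum>\<gamma>\<in>ksubsets n (Suc k). \<Sum>j<Suc k. cmod (minor B \<alpha> (\<gamma> - {sorted_list_of_set \<gamma> ! j})))"
      by (rule sum.cong[OF refl]) (rule sub_sum)
    also have "\<dots> \<le> (\<Sum>\<gamma>\<in>ksubsets n (Suc k). real (Suc k) powr (real (Suc k) / 2))"
      by (rule sum_mono) (rule row_block[OF le1 a], auto)
    also have "\<dots> = real (n choose Suc k) * (real (Suc k) powr (real (Suc k) / 2))"
      by (simp add: ksubsets_def n_subsets)
    also have "\<dots> = real (n choose Suc k) * (real (Suc k) * P)"
      by (simp only: P1)
    also have "\<dots> = real (n - k) * (real (n choose k) * P)"
      using binom by (simp add: mult.assoc[symmetric])
    finally show ?thesis using kn by simp
  qed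
  have ne: "ksubsets n k \<noteq> {}"
  proof -
    have "{0..<k} \<in> ksubsets n k" using kn by (auto simp: ksubsets_def)
    then show ?thesis by blast
  qed
  show ?thesis
    unfolding compound_inf_norm_def dr dc P_def[symmetric]
    using ne row by (subst Max_le_iff) (auto simp: finite_ksubsets)
qed

end
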